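(* Let $G_1,G_2$ be induced subgraphs of a graph $G$ with $V(G)=V(G_1)\cup V(G_2)$ and $E(G)=E(G_1)\cup E(G_2)$, let $S$ be the subgraph induced by $V(G_1)\cap V(G_2)$, suppose $G-V(S)$ is disconnected and $S$ contains a nonedge $e$. If $G_1$ is an atom and either $G_2$ or $G_2\cup e$ is an atom, then $G$ is an atom.
   Context: A clique is a set of pairwise adjacent vertices (possibly empty). A clique separator of a graph $H$ is a clique $U$ such that $H-U$ (the subgraph induced by $V(H)\setminus U$) has at least two connected components. A graph is an atom if it is nonempty and has no clique separator. $G_2\cup e$ denotes $G_2$ with $e$ added as an edge. *)

theory Defs
  imports Main
begin

definition graph :: "'a set \<Rightarrow> ('a \<Rightarrow> 'a \<Rightarrow> bool) \<Rightarrow> bool" where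
  "graph V E \<longleftrightarrow> finite V \<and> (\<forall>x y. E x y \<longrightarrow> x \<in> V \<and> y \<in> V \<and> x \<noteq> y \<and> E y x)"

definition induced :: "('a \<Rightarrow> 'a \<Rightarrow> bool) \<Rightarrow> 'a set \<Rightarrow> 'a \<Rightarrow> 'a \<Rightarrow> bool" where
  "induced E W = (\<lambda>x y. x \<in> W \<and> y \<in> W \<and> E x y)"

definition add_edge :: "('a \<Rightarrow> 'a \<Rightarrow> bool) \<Rightarrow> 'a \<Rightarrow> 'a \<Rightarrow> 'a \<Rightarrow> 'a \<Rightarrow> bool" where
  "add_edge E u v = (\<lambda>x y. E x y \<or> (x = u \<and> y = v) \<or> (x = v \<and> y = u))"

definition disconnected :: "'a set \<Rightarrow> ('a \<Rightarrow> 'a \<Rightarrow> bool) \<Rightarrow> bool" where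
  "disconnected W E \<longleftrightarrow> (\<exists>x\<in>W. \<exists>y\<in>W. \<not> (induced E W)\<^sup>*\<^sup>* x y)"

definition clique :: "'a set \<Rightarrow> ('a \<Rightarrow> 'a \<Rightarrow> bool) \<Rightarrow> 'a set \<Rightarrow> bool" where
  "clique V E U \<longleftrightarrow> U \<subseteq> V \<and> (\<forall>x\<in>U. \<forall>y\<in>U. x \<noteq> y \<longrightarrow> E x y)"

definition clique_separator :: "'a set \<Rightarrow> ('a \<Rightarrow> 'a \<Rightarrow> bool) \<Rightarrow> 'a set \<Rightarrow> bool" where
  "clique_separator V E U \<longleftrightarrow> clique V E U \<and> disconnected (V - U) E"

definition atom :: "'a set \<Rightarrow> ('a \<Rightarrow> 'a \<Rightarrow> bool) \<Rightarrow> bool" where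
  "atom V E \<longleftrightarrow> V \<noteq> {} \<and> \<not> (\<exists>U. clique_separator V E U)"

end

theory Submission
  imports Defs
begin

lemma lift_rt:
  assumes "\<And>a b. P a b \<Longrightarrow> Q\<^sup>*\<^sup>* a b" and "P\<^sup>*\<^sup>* x y"
  shows "Q\<^sup>*\<^sup>* x y"
  using assms(2) by induction (auto intro: rtranclp_trans assms(1))

lemma conn:
  assumes "atom W F" "clique W F U'" "x \<in> W - U'" "y \<in> W - U'"
  shows "(induced F (W-U'))\<^sup>*\<^sup>* x y"
  using assms unfolding atom_def clique_separator_def disconnected_def by blast

theorem mainTheorem17:
  fixes V V1 V2 :: "'a set" and E :: "'a \<Rightarrow> 'a \<Rightarrow> bool" and u v :: 'a
  assumes "graph V E"
    and "V1 \<subseteq> V" and "V2 \<subseteq> V"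
    and "V = V1 \<union> V2"
    and "\<forall>x y. E x y \<longrightarrow> (induced E V1 x y \<or> induced E V2 x y)"
    and "disconnected (V - (V1 \<inter> V2)) E"
    and "u \<in> V1 \<inter> V2" and "v \<in> V1 \<inter> V2" and "u \<noteq> v" and "\<not> E u v"
    and "atom V1 (induced E V1)"
    and "atom V2 (induced E V2) \<or> atom V2 (add_edge (induced E V2) u v)"
  shows "atom V E"
proof -
  have ne: "V \<noteq> {}" using assms(7,4) by auto
  { fix U assume cs: "clique_separator V E U"
    hence cl: "clique V E U" and dis: "disconnected (V - U) E"
      unfolding clique_separator_def by auto
    obtain w where w: "w \<in> {u,v}" "w \<notin> U"
      using cl assms(9,10) unfolding clique_def by blast
    let ?R = "induced E (V - U)"
    have c1: "clique V1 (induced E V1) (U \<inter> V1)"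
      using cl unfolding clique_def induced_def by auto
    have c2: "clique V2 (induced E V2) (U \<inter> V2)"
      using cl unfolding clique_def induced_def by auto
    have c2': "clique V2 (add_edge (induced E V2) u v) (U \<inter> V2)"
      using cl unfolding clique_def induced_def add_edge_def by auto
    have e1: "V1 - U \<inter> V1 = V1 - U" and e2: "V2 - U \<inter> V2 = V2 - U" by auto
    have r1: "?R\<^sup>*\<^sup>* x w" if "x \<in> V1 - U" for x
    proof -
      have "(induced (induced E V1) (V1 - U))\<^sup>*\<^sup>* x w"
        using conn[OF assms(11) c1] that w assms(7,8) e1 by auto
      thus ?thesis
        by (rule lift_rt[rotated]) (use assms(2) in \<open>auto simp: induced_def\<close>)
    qed
    have r1s: "?R\<^sup>*\<^sup>* x y" if "x \<in> V1 - U" "y \<in> V1 - U" for x y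
    proof -
      have "?R\<^sup>*\<^sup>* x w" "?R\<^sup>*\<^sup>* y w" using r1 that by auto
      moreover have "symp ?R" using assms(1) unfolding graph_def induced_def symp_def by auto
      ultimately show ?thesis by (meson rtranclp_trans symp_rtranclp symp_def)
    qed
    have r2: "?R\<^sup>*\<^sup>* x w" if "x \<in> V2 - U" for x
      using assms(12)
    proof
      assume a: "atom V2 (induced E V2)"
      have "(induced (induced E V2) (V2 - U))\<^sup>*\<^sup>* x w"
        using conn[OF a c2] that w assms(7,8) e2 by auto
      thus ?thesis
        by (rule lift_rt[rotated]) (use assms(3) in \<open>auto simp: induced_def\<close>)
    next
      assume a: "atom V2 (add_edge (induced E V2) u v)"
      have "(induced (add_edge (induced E V2) u v) (V2 - U))\<^sup>*\<^sup>* x w"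
        using conn[OF a c2'] that w assms(7,8) e2 by auto
      thus ?thesis
      proof (rule lift_rt[rotated])
        fix a b assume ab: "induced (add_edge (induced E V2) u v) (V2 - U) a b"
        show "?R\<^sup>*\<^sup>* a b"
        proof (cases "induced E V2 a b")
          case True thus ?thesis using ab assms(3) by (auto simp: induced_def)
        next
          case False
          hence "a \<in> V1 - U" "b \<in> V1 - U" using ab assms(7,8)
            by (auto simp: induced_def add_edge_def)
          thus ?thesis by (rule r1s)
        qed
      qed
    qed
    have allw: "?R\<^sup>*\<^sup>* x w" if "x \<in> V - U" for x
      using that r1 r2 assms(4) by auto
    have "symp ?R" using assms(1) unfolding graph_def induced_def symp_def by auto
    hence "?R\<^sup>*\<^sup>* x y" if "x \<in> V - U" "y \<in> V - U" for x y
      using allw[OF that(1)] allw[OF that(2)]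
      by (meson rtranclp_trans symp_rtranclp symp_def)
    hence False using dis unfolding disconnected_def by blast
  }
  thus ?thesis using ne unfolding atom_def by blast
qed

end
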